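(* If $|D|\ge 2n^2$, then at least a fraction $1/e$ of all inputs in $(D\times D)^n$ belong to $EB^{-1}(1)$.
   Context: $D$ is a finite domain. Two elements $x=(x_1,x_2)$ and $y=(y_1,y_2)$ of $D\times D$ are bidistinct if $x_1\ne y_2$ and $x_2\ne y_1$. The element bidistinctness function $EB:(D\times D)^n\to\{0,1\}$ equals $1$ iff for every pair of indices $1\le i,j\le n$ the $i$-th and $j$-th pairs of the input are bidistinct. *)

theory Defs
  imports Complex_Main
begin

definition bidistinct :: "'a \<times> 'a \<Rightarrow> 'a \<times> 'a \<Rightarrow> bool" where
  "bidistinct x y \<longleftrightarrow> fst x \<noteq> snd y \<and> snd x \<noteq> fst y"

text \<open>Inputs in (D x D)^n are represented as lists of length n with entries in D x D;
  the i-th pair is xs ! i (0-based).\<close>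
definition EB :: "('a \<times> 'a) list \<Rightarrow> nat" where
  "EB xs = (if \<forall>i<length xs. \<forall>j<length xs. bidistinct (xs ! i) (xs ! j) then 1 else 0)"

definition inputs :: "'a set \<Rightarrow> nat \<Rightarrow> ('a \<times> 'a) list set" where
  "inputs D n = {xs. length xs = n \<and> set xs \<subseteq> D \<times> D}"

end

theory Submission
  imports Defs
begin

lemma EB_iff: "EB xs = 1 \<longleftrightarrow> (\<forall>a\<in>set xs. \<forall>b\<in>set xs. fst a \<noteq> snd b)"
proof -
  have "(\<forall>i<length xs. \<forall>j<length xs. bidistinct (xs ! i) (xs ! j)) \<longleftrightarrow> (\<forall>a\<in>set xs. \<forall>b\<in>set xs. bidistinct a b)"
    by (metis in_set_conv_nth)
  moreover have "(\<forall>a\<in>set xs. \<forall>b\<in>set xs. bidistinct a b) \<longleftrightarrow> (\<forall>a\<in>set xs. \<forall>b\<in>set xs. fst a \<noteq> snd b)"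
    unfolding bidistinct_def by (auto; metis fst_conv snd_conv)
  ultimately show ?thesis unfolding EB_def by simp
qed

definition G :: "'a set \<Rightarrow> nat \<Rightarrow> ('a \<times> 'a) list set" where
  "G D n = {xs. length xs = n \<and> set xs \<subseteq> D \<times> D \<and> (\<forall>a\<in>set xs. \<forall>b\<in>set xs. fst a \<noteq> snd b)}"

definition E :: "'a set \<Rightarrow> ('a \<times> 'a) list \<Rightarrow> ('a \<times> 'a) set" where
  "E D xs = ((D - snd ` set xs) \<times> (D - fst ` set xs)) - {p. fst p = snd p}"

lemma finite_G: "finite D \<Longrightarrow> finite (G D n)"
proof -
  assume f: "finite D"
  have "G D n \<subseteq> {xs. set xs \<subseteq> D \<times> D \<and> length xs = n}" by (auto simp: G_def)
  moreover have "finite {xs. set xs \<subseteq> D \<times> D \<and> length xs = n}"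
    using f by (intro finite_lists_length_eq) auto
  ultimately show ?thesis by (rule finite_subset)
qed

lemma card_E:
  assumes f: "finite D" and xs: "length xs = n"
  shows "real (card (E D xs)) \<ge> real (card D)^2 - (2*real n+1) * real (card D)"
proof (cases "card D \<ge> n")
  case False
  have "real (card D)^2 - (2*real n+1) * real (card D) \<le> 0"
    using False by (simp add: power2_eq_square mult_right_mono)
  moreover have "real (card (E D xs)) \<ge> 0" by simp
  ultimately show ?thesis by linarith
next
  case True
  let ?N = "card D"
  let ?S = "(D - snd ` set xs) \<times> (D - fst ` set xs)"
  have cB: "card (snd ` set xs) \<le> n" using xs
    by (metis card_image_le card_length finite_set le_trans)
  have cA: "card (fst ` set xs) \<le> n" using xs
    by (metis card_image_le card_length finite_set le_trans)
  have d1: "card (D - snd ` set xs) \<ge> ?N - n"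
    using diff_card_le_card_Diff[of "snd ` set xs" D] cB by auto
  have d2: "card (D - fst ` set xs) \<ge> ?N - n"
    using diff_card_le_card_Diff[of "fst ` set xs" D] cA by auto
  have cS: "card ?S \<ge> (?N - n) * (?N - n)"
    using d1 d2 by (simp add: card_cartesian_product mult_le_mono)
  have fS: "finite ?S" using f by auto
  have sub: "?S \<inter> {p. fst p = snd p} \<subseteq> (\<lambda>a. (a,a)) ` D" by auto
  have "card (?S \<inter> {p. fst p = snd p}) \<le> card ((\<lambda>a. (a,a)) ` D)"
    by (rule card_mono[OF _ sub]) (simp add: f)
  also have "\<dots> \<le> ?N" by (rule card_image_le[OF f])
  finally have cT: "card (?S \<inter> {p. fst p = snd p}) \<le> ?N" .
  have "card (E D xs) = card ?S - card (?S \<inter> {p. fst p = snd p})"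
    unfolding E_def by (rule card_Diff_subset_Int) (use fS in auto)
  hence "card (E D xs) \<ge> (?N - n) * (?N - n) - ?N" using cS cT by linarith
  hence "real (card (E D xs)) \<ge> real ((?N - n) * (?N - n)) - real ?N" by linarith
  moreover have "real ((?N - n) * (?N - n)) = (real ?N - n)^2"
    using True by (simp add: of_nat_diff power2_eq_square)
  moreover have "(real ?N - n)^2 \<ge> real ?N ^2 - 2*n*real ?N"
    by (simp add: power2_eq_square algebra_simps)
  ultimately show ?thesis by (simp add: algebra_simps)
qed

lemma G_step:
  assumes f: "finite D"
  shows "real (card (G D (Suc n))) \<ge> real (card (G D n)) * (real (card D)^2 - (2*real n+1) * real (card D))"
proof -
  let ?f = "\<lambda>(xs, p). xs @ [p]"
  let ?Sg = "Sigma (G D n) (E D)"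
  have img: "?f ` ?Sg \<subseteq> G D (Suc n)"
    by (auto simp: G_def E_def image_iff; force)
  have inj: "inj_on ?f ?Sg" by (auto simp: inj_on_def)
  have fSg: "finite ?Sg" using finite_G[OF f] f by (auto simp: E_def intro!: finite_SigmaI)
  have c1: "card ?Sg \<le> card (G D (Suc n))"
    using card_inj_on_le[OF inj img] finite_G[OF f] by blast
  have c2: "card ?Sg = (\<Sum>xs\<in>G D n. card (E D xs))"
    using finite_G[OF f] f by (simp add: card_SigmaI E_def)
  have c3: "(\<Sum>xs\<in>G D n. real (card D)^2 - (2*real n+1) * real (card D)) \<le> (\<Sum>xs\<in>G D n. real (card (E D xs)))"
  proof (rule sum_mono)
    fix xs assume "xs \<in> G D n"
    hence "length xs = n" by (simp add: G_def)
    thus "real (card D)^2 - (2*real n+1) * real (card D) \<le> real (card (E D xs))" by (rule card_E[OF f])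
  qed
  have c4: "real (card ?Sg) = (\<Sum>xs\<in>G D n. real (card (E D xs)))"
    unfolding c2 by (rule of_nat_sum)
  have c5: "real (card ?Sg) \<le> real (card (G D (Suc n)))" using c1 by (rule of_nat_mono)
  have "(\<Sum>xs\<in>G D n. real (card D)^2 - (2*real n+1) * real (card D)) \<le> real (card (G D (Suc n)))"
    using c3 c4 c5 by linarith
  then show ?thesis by (simp add: mult.commute)
qed

lemma G_bound:
  assumes f: "finite D"
  shows "real (card (G D n)) \<ge> real (card D)^(2*n) * (1 - real n^2 / real (card D))"
proof (induction n)
  case 0
  have "G D 0 = {[]}" by (auto simp: G_def)
  then show ?case by simp
next
  case (Suc n)
  let ?N = "real (card D)"
  show ?case
  proof (cases "?N^2 - (2*real n+1) * ?N \<ge> 0 \<and> ?N > 0")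
    case True
    hence c: "?N^2 - (2*real n+1)*?N \<ge> 0" and Np: "?N > 0" by auto
    have A1: "real (card (G D (Suc n))) \<ge> real (card (G D n)) * (?N^2 - (2*real n+1) * ?N)"
      by (rule G_step[OF f])
    have A2: "?N^(2*n) * (1 - real n^2 / ?N) * (?N^2 - (2*real n+1) * ?N) \<le> real (card (G D n)) * (?N^2 - (2*real n+1) * ?N)"
      using Suc.IH c by (rule mult_right_mono)
    have A: "real (card (G D (Suc n))) \<ge> ?N^(2*n) * (1 - real n^2 / ?N) * (?N^2 - (2*real n+1) * ?N)"
      using A1 A2 by linarith
    have eq1: "?N^2 - (2*real n+1) * ?N = ?N^2 * (1 - (2*real n+1)/?N)"
      using Np by (simp add: field_simps power2_eq_square)
    have ab: "(1 - real n^2 / ?N) * (1 - (2*real n+1)/?N) \<ge> 1 - real (Suc n)^2 / ?N"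
    proof -
      have "(1 - real n^2 / ?N) * (1 - (2*real n+1)/?N) = 1 - (real n^2 + (2*real n+1))/?N + (real n^2/?N)*((2*real n+1)/?N)"
        using Np by (simp add: field_simps)
      moreover have "(real n^2/?N)*((2*real n+1)/?N) \<ge> 0" using Np by simp
      moreover have "real n^2 + (2*real n+1) = real (Suc n)^2" by (simp add: power2_eq_square algebra_simps)
      ultimately show ?thesis by simp
    qed
    have "?N^(2*n) * (1 - real n^2 / ?N) * (?N^2 - (2*real n+1) * ?N)
        = ?N^(2*Suc n) * ((1 - real n^2 / ?N) * (1 - (2*real n+1)/?N))"
    proof -
      have pw: "?N^(2*Suc n) = ?N^(2*n)*?N^2" by (simp add: power_add[symmetric])
      show ?thesis unfolding eq1 pw by (simp only: mult_ac)
    qed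
    also have "\<dots> \<ge> ?N^(2*Suc n) * (1 - real (Suc n)^2 / ?N)"
      using ab by (intro mult_left_mono) auto
    finally show ?thesis using A by linarith
  next
    case False
    have "?N^(2*Suc n) * (1 - real (Suc n)^2 / ?N) \<le> 0"
    proof (cases "?N > 0")
      case True
      with False have "?N^2 < (2*real n+1)*?N" by auto
      hence "?N < 2*n+1" using True by (simp add: power2_eq_square)
      also have "\<dots> \<le> real (Suc n)^2" by (simp add: power2_eq_square algebra_simps)
      finally have "1 - real (Suc n)^2 / ?N \<le> 0" using True by (simp add: field_simps)
      then show ?thesis using True by (simp add: mult_nonneg_nonpos)
    next
      case False
      then show ?thesis by simp
    qed
    then show ?thesis by (smt (verit) of_nat_0_le_iff)
  qed
qed

theorem lemma9:
  fixes D :: "'a set" and n :: nat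
  assumes "finite D"
    and "card D \<ge> 2 * n ^ 2"
  shows "real (card {xs \<in> inputs D n. EB xs = 1}) \<ge> exp (-1) * real (card (inputs D n))"
proof -
  have eqG: "{xs \<in> inputs D n. EB xs = 1} = G D n"
  proof -
    have "\<And>xs. EB xs = 1 \<longleftrightarrow> (\<forall>a\<in>set xs. \<forall>b\<in>set xs. fst a \<noteq> snd b)" by (rule EB_iff)
    then show ?thesis unfolding inputs_def G_def by blast
  qed
  have ci: "card (inputs D n) = card D ^ (2*n)"
  proof -
    have "inputs D n = {xs. set xs \<subseteq> D \<times> D \<and> length xs = n}" by (auto simp: inputs_def)
    hence "card (inputs D n) = card (D \<times> D) ^ n" using assms(1) by (simp add: card_lists_length_eq)
    thus ?thesis by (simp add: card_cartesian_product power_mult power2_eq_square)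
  qed
  have e: "exp (-1::real) \<le> 1/2"
  proof -
    have "2 \<le> exp (1::real)" using exp_ge_add_one_self[of 1] by simp
    thus ?thesis by (simp add: exp_minus field_simps)
  qed
  show ?thesis
  proof (cases "n = 0")
    case True
    have "G D 0 = {[]}" by (auto simp: G_def)
    then show ?thesis using True eqG ci by simp
  next
    case False
    hence Np: "real (card D) > 0" using assms(2) by (metis gr0I le_zero_eq mult_is_0 power_eq_0_iff zero_neq_numeral of_nat_0_less_iff)
    have "real n^2 / real (card D) \<le> 1/2"
      using assms(2) Np by (simp add: field_simps) (metis of_nat_le_iff of_nat_mult of_nat_numeral of_nat_power)
    hence h: "1 - real n^2 / real (card D) \<ge> exp (-1)" using e by linarith
    have "exp (-1) * real (card D)^(2*n) \<le> (1 - real n^2 / real (card D)) * real (card D)^(2*n)"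
      by (rule mult_right_mono[OF h]) simp
    hence "exp (-1) * real (card (inputs D n)) \<le> real (card D)^(2*n) * (1 - real n^2 / real (card D))"
      by (simp add: ci mult.commute)
    also have "\<dots> \<le> real (card (G D n))" by (rule G_bound[OF assms(1)])
    finally show ?thesis using eqG by simp
  qed
qed

end
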